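(* For integers $n\ge1$ and $m\ge n$, let $N=2^{nm}n$ and let $P$ be the set of the first $N$ primes. For each $1\le i\le n$, $1\le j\le m$, choose a random subset $P'_{ij}\subseteq P$ by including each $p\in P$ independently with probability $1/2$ (independently over all $p,i,j$), and set $A_{ij}=\prod_{p\in P'_{ij}}p$. Then: (i) the random $n\times m$ integer matrix $A=(A_{ij})$ is $\tfrac12$-balanced; (ii) for all sufficiently large $n$ (and all $m\ge n$), $|A_{ij}|\le e^{3^{nm}}$ for all $i,j$ almost surely; (iii) $\mathbb{P}(A:\mathbb{Z}^m\to\mathbb{Z}^n\text{ is surjective})\le e^{-n}$, which tends to $0$ as $n\to\infty$.
   Context: A random variable $y$ taking values in $\mathbb{Z}$ is called $\epsilon$-balanced if for every prime $p$ and every residue $r\in\mathbb{Z}/p\mathbb{Z}$ we have $\mathbb{P}(y\equiv r \pmod p)\le 1-\epsilon$. A random matrix is $\epsilon$-balanced if its entries are independent and each entry is $\epsilon$-balanced. *)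

theory Defs
  imports "HOL-Probability.Probability" "HOL-Number_Theory.Number_Theory"
begin

definition first_primes :: "nat \<Rightarrow> nat set" where
  "first_primes N = {p. prime p \<and> card {q. prime q \<and> q < p} < N}"

definition eps_balanced :: "real \<Rightarrow> int pmf \<Rightarrow> bool" where
  "eps_balanced eps Y \<longleftrightarrow>
     (\<forall>p::nat. \<forall>r::int. prime p \<longrightarrow>
        measure_pmf.prob Y {y. [y = r] (mod int p)} \<le> 1 - eps)"

definition eps_balanced_matrix ::
  "real \<Rightarrow> 'w pmf \<Rightarrow> nat \<Rightarrow> nat \<Rightarrow> ('w \<Rightarrow> nat \<Rightarrow> nat \<Rightarrow> int) \<Rightarrow> bool" where
  "eps_balanced_matrix eps M n m X \<longleftrightarrow>
     prob_space.indep_vars (measure_pmf M) (\<lambda>_. count_space UNIV)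
        (\<lambda>(i,j) w. X w i j) ({..<n} \<times> {..<m}) \<and>
     (\<forall>i<n. \<forall>j<m. eps_balanced eps (map_pmf (\<lambda>w. X w i j) M))"

definition coin_space :: "nat \<Rightarrow> nat \<Rightarrow> (nat \<times> nat \<times> nat \<Rightarrow> bool) pmf" where
  "coin_space n m = Pi_pmf ({..<n} \<times> {..<m} \<times> first_primes (2 ^ (n * m) * n)) False
                          (\<lambda>_. bernoulli_pmf (1/2))"

text \<open>A_ij = product of the primes p in P'_ij = {p \<in> P. coin (i,j,p)}.\<close>
definition rand_entry :: "nat \<Rightarrow> nat \<Rightarrow> (nat \<times> nat \<times> nat \<Rightarrow> bool) \<Rightarrow> nat \<Rightarrow> nat \<Rightarrow> int" where
  "rand_entry n m w i j = (\<Prod>p\<in>{p \<in> first_primes (2 ^ (n * m) * n). w (i, j, p)}. int p)"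

definition int_mat_surj :: "nat \<Rightarrow> nat \<Rightarrow> (nat \<Rightarrow> nat \<Rightarrow> int) \<Rightarrow> bool" where
  "int_mat_surj n m A \<longleftrightarrow>
     (\<forall>b :: nat \<Rightarrow> int. \<exists>x :: nat \<Rightarrow> int. \<forall>i<n. (\<Sum>j<m. A i j * x j) = b i)"

end

theory Submission
  imports Defs
begin


lemma div_Suc_indicator:
  fixes n d :: nat assumes "d > 0"
  shows "Suc n div d = n div d + (if d dvd Suc n then 1 else 0)"
  using assms by (auto simp: div_Suc dvd_eq_mod_eq_0)

lemma card_pow_dvd:
  fixes p a T :: nat
  assumes p: "prime p" and a: "a > 0" and T: "a \<le> T"
  shows "card {i\<in>{1..T}. p ^ i dvd a} = multiplicity p a"
proof -
  have nu: "\<not> is_unit p" using p by auto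
  have "p ^ multiplicity p a dvd a" by (rule multiplicity_dvd)
  hence "p ^ multiplicity p a \<le> a" using a by (simp add: dvd_imp_le)
  moreover have "multiplicity p a < p ^ multiplicity p a"
  proof -
    have "multiplicity p a < 2 ^ multiplicity p a" by (rule less_exp)
    also have "\<dots> \<le> p ^ multiplicity p a" using prime_ge_2_nat[OF p] by (simp add: power_mono)
    finally show ?thesis .
  qed
  ultimately have "multiplicity p a \<le> T" using T by linarith
  have iff: "p ^ i dvd a \<longleftrightarrow> i \<le> multiplicity p a" for i
    using power_dvd_iff_le_multiplicity[of a p i] a nu by simp
  have "{i\<in>{1..T}. p ^ i dvd a} = {1..multiplicity p a}"
    unfolding iff using \<open>multiplicity p a \<le> T\<close> by auto
  thus ?thesis by simp
qed

lemma legendre: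
  fixes p :: nat assumes p: "prime p"
  shows "T \<ge> n \<Longrightarrow> multiplicity p (fact n :: nat) = (\<Sum>i\<in>{1..T}. n div p ^ i)"
proof (induction n)
  case 0 then show ?case by simp
next
  case (Suc n)
  have pos: "\<And>i. p ^ i > 0" using p prime_gt_0_nat by simp
  have "multiplicity p (fact (Suc n) :: nat) = multiplicity p (Suc n) + multiplicity p (fact n :: nat)"
  proof -
    have "(fact (Suc n)::nat) = Suc n * fact n" by simp
    also have "multiplicity p \<dots> = multiplicity p (Suc n) + multiplicity p (fact n :: nat)"
      by (rule prime_elem_multiplicity_mult_distrib) (use p in auto)
    finally show ?thesis .
  qed
  also have "multiplicity p (fact n :: nat) = (\<Sum>i\<in>{1..T}. n div p ^ i)" using Suc by simp
  also have "multiplicity p (Suc n) = card {i\<in>{1..T}. p ^ i dvd Suc n}"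
    using card_pow_dvd[OF p, of "Suc n" T] Suc by simp
  also have "card {i\<in>{1..T}. p ^ i dvd Suc n} = (\<Sum>i\<in>{1..T}. if p ^ i dvd Suc n then 1 else 0)"
  proof -
    have "{i\<in>{1..T}. p ^ i dvd Suc n} = {1..T} \<inter> {i. p ^ i dvd Suc n}" by auto
    thus ?thesis by (simp add: sum.If_cases)
  qed
  also have "\<dots> + (\<Sum>i\<in>{1..T}. n div p ^ i) = (\<Sum>i\<in>{1..T}. Suc n div p ^ i)"
    unfolding sum.distrib[symmetric] by (rule sum.cong) (auto simp: div_Suc_indicator[OF pos])
  finally show ?case .
qed
lemma div_double_le:
  fixes k d :: nat assumes "d > 0"
  shows "2 * k div d \<le> 2 * (k div d) + (if d \<le> 2 * k then 1 else 0)"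
proof (cases "d \<le> 2 * k")
  case True
  have "k < d * (k div d + 1)"
    using assms by (metis add.commute div_mult_mod_eq mod_less_divisor nat_add_left_cancel_less distrib_left mult.commute mult_1_right)
  hence "2 * k < (2 * (k div d) + 2) * d" by (simp add: algebra_simps)
  hence "2 * k div d < 2 * (k div d) + 2" using assms by (simp add: div_less_iff_less_mult)
  thus ?thesis using True by simp
next
  case False thus ?thesis by simp
qed

lemma card_pow_le:
  fixes p M :: nat assumes p: "prime p" and M: "M \<ge> 1"
  shows "p ^ card {i\<in>{1..M}. p ^ i \<le> M} \<le> M"
proof (cases "{i\<in>{1..M}. p ^ i \<le> M} = {}")
  case True
  have "card {i\<in>{1..M}. p ^ i \<le> M} = 0" by (simp only: True card.empty)
  thus ?thesis using M by (metis power_0)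
next
  case False
  define S where "S = {i\<in>{1..M}. p ^ i \<le> M}"
  have fin: "finite S" unfolding S_def by simp
  have ne: "S \<noteq> {}" using False S_def by simp
  have t: "Max S \<in> S" using Max_in[OF fin ne] .
  have "S \<subseteq> {1..Max S}" using fin S_def by auto
  hence "card S \<le> Max S" using card_mono[of "{1..Max S}" S] by simp
  hence "p ^ card S \<le> p ^ Max S" by (rule power_increasing) (use prime_gt_0_nat[OF p] in simp)
  also have "\<dots> \<le> M" using t S_def by simp
  finally show ?thesis unfolding S_def .
qed

lemma central_binom_mult:
  fixes p k :: nat assumes p: "prime p" and k: "k \<ge> 1"
  shows "p ^ multiplicity p ((2*k) choose k) \<le> 2 * k"
proof -
  define C where "C = (2*k) choose k"
  define S where "S = {i\<in>{1..2*k}. p ^ i \<le> 2*k}"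
  have Cpos: "C > 0" unfolding C_def by simp
  have "fact k * fact k * C = (fact (2*k) :: nat)"
    using binomial_fact_lemma[of k "2*k"] unfolding C_def by (simp add: mult_2)
  hence "multiplicity p (fact (2*k) :: nat) = multiplicity p (fact k * fact k :: nat) + multiplicity p C"
    using p Cpos by (metis prime_elem_multiplicity_mult_distrib fact_nonzero mult_eq_0_iff less_irrefl prime_imp_prime_elem)
  also have "multiplicity p (fact k * fact k :: nat) = multiplicity p (fact k :: nat) + multiplicity p (fact k :: nat)"
    using p by (intro prime_elem_multiplicity_mult_distrib) auto
  finally have eq: "multiplicity p (fact (2*k) :: nat) = 2 * multiplicity p (fact k :: nat) + multiplicity p C" by simp
  have l1: "multiplicity p (fact (2*k) :: nat) = (\<Sum>i\<in>{1..2*k}. 2*k div p ^ i)"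
    using legendre[OF p] by simp
  have l2: "multiplicity p (fact k :: nat) = (\<Sum>i\<in>{1..2*k}. k div p ^ i)"
    using legendre[OF p] by simp
  have "(\<Sum>i\<in>{1..2*k}. 2*k div p ^ i) \<le> (\<Sum>i\<in>{1..2*k}. 2 * (k div p ^ i) + (if p ^ i \<le> 2*k then 1 else 0))"
    by (rule sum_mono, rule div_double_le) (use p prime_gt_0_nat in simp)
  also have "\<dots> = 2 * (\<Sum>i\<in>{1..2*k}. k div p ^ i) + card S"
  proof -
    have "(\<Sum>i\<in>{1..2*k}. (if p ^ i \<le> 2*k then 1 else 0::nat)) = card S"
    proof -
      have "S = {1..2*k} \<inter> {i. p ^ i \<le> 2*k}" unfolding S_def by auto
      thus ?thesis by (simp add: sum.If_cases)
    qed
    thus ?thesis by (simp add: sum.distrib sum_distrib_left)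
  qed
  finally have "multiplicity p C \<le> card S" using eq l1 l2 by linarith
  hence "p ^ multiplicity p C \<le> p ^ card S" by (rule power_increasing) (use prime_gt_0_nat[OF p] in simp)
  also have "\<dots> \<le> 2 * k" unfolding S_def by (rule card_pow_le[OF p]) (use k in simp)
  finally show ?thesis unfolding C_def .
qed

lemma central_binom_upper:
  fixes k :: nat assumes k: "k \<ge> 1"
  shows "(2*k) choose k \<le> (2*k) ^ card {p. prime p \<and> p \<le> 2*k}"
proof -
  define C where "C = (2*k) choose k"
  have Cpos: "C > 0" unfolding C_def by simp
  have sub: "prime_factors C \<subseteq> {p. prime p \<and> p \<le> 2*k}"
  proof
    fix p assume "p \<in> prime_factors C"
    hence pp: "prime p" and "p dvd C" by (auto simp: in_prime_factors_iff)
    moreover have "C dvd fact (2*k)"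
    proof -
      have "fact k * fact k * C = (fact (2*k) :: nat)"
        using binomial_fact_lemma[of k "2*k"] unfolding C_def by (simp add: mult_2)
      thus ?thesis by (metis dvd_triv_right)
    qed
    ultimately have "p dvd fact (2*k)" using dvd_trans by blast
    thus "p \<in> {p. prime p \<and> p \<le> 2*k}" using pp prime_dvd_fact_iff by auto
  qed
  have "C = (\<Prod>p\<in>prime_factors C. p ^ multiplicity p C)"
    using prime_factorization_nat[OF Cpos] .
  also have "\<dots> \<le> (\<Prod>p\<in>prime_factors C. 2 * k)"
    by (rule prod_mono) (use central_binom_mult k in \<open>auto simp: C_def in_prime_factors_iff\<close>)
  also have "\<dots> = (2*k) ^ card (prime_factors C)" by simp
  also have "\<dots> \<le> (2*k) ^ card {p. prime p \<and> p \<le> 2*k}"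
    by (rule power_increasing) (use k sub in \<open>auto intro: card_mono\<close>)
  finally show ?thesis unfolding C_def .
qed

lemma central_binom_lower:
  fixes k :: nat
  shows "4 ^ k \<le> (2*k+1) * ((2*k) choose k)"
proof -
  have "4 ^ k = (2::nat) ^ (2*k)" by (simp add: power_mult)
  also have "\<dots> = (\<Sum>j\<le>2*k. (2*k) choose j)" by (simp add: choose_row_sum)
  also have "\<dots> \<le> (\<Sum>j\<le>2*k. (2*k) choose k)"
    by (rule sum_mono) (metis binomial_maximum nonzero_mult_div_cancel_left zero_neq_numeral)
  also have "\<dots> = (2*k+1) * ((2*k) choose k)" by simp
  finally show ?thesis .
qed

lemma four_pow_gt: "N \<ge> 1 \<Longrightarrow> 2 * N^2 + 1 < (4::nat) ^ N"
proof (induction N)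
  case 0 thus ?case by simp
next
  case (Suc N)
  show ?case
  proof (cases "N = 0")
    case True thus ?thesis by simp
  next
    case False
    hence IH: "2 * N^2 + 1 < 4 ^ N" using Suc by simp
    have "N \<le> N * N" using False by simp
    hence h: "4*N \<le> 6*(N*N)" by linarith
    have "2 * (Suc N)^2 + 1 = 2*(N*N) + 4*N + 3" by (simp add: power2_eq_square algebra_simps)
    also have "\<dots> \<le> 4 * (2 * N^2 + 1)"
    proof -
      have e: "4 * (2 * N^2 + 1) = 8*(N*N) + 4" by (simp add: power2_eq_square)
      show ?thesis unfolding e using h by linarith
    qed
    finally have "2 * (Suc N)^2 + 1 \<le> 4 * (2 * N^2 + 1)" .
    also have "\<dots> < 4 * 4 ^ N" using IH by simp
    finally show ?thesis by simp
  qed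
qed

lemma pi_lower:
  fixes N :: nat assumes N: "N \<ge> 1"
  shows "N \<le> card {p. prime p \<and> p \<le> 2 * N^2}"
proof (rule ccontr)
  define k where "k = N^2"
  define c where "c = card {p. prime p \<and> p \<le> 2 * k}"
  assume "\<not> N \<le> card {p. prime p \<and> p \<le> 2 * N^2}"
  hence cN: "c + 1 \<le> N" unfolding c_def k_def by simp
  have k1: "k \<ge> 1" using N unfolding k_def by simp
  have "4 ^ k \<le> (2*k+1) * ((2*k) choose k)" by (rule central_binom_lower)
  also have "\<dots> \<le> (2*k+1) * (2*k) ^ c" by (rule mult_le_mono2) (rule central_binom_upper[OF k1, folded c_def])
  also have "\<dots> \<le> (2*k+1) * (2*k+1) ^ c" by (rule mult_le_mono2) (rule power_mono; simp)
  also have "\<dots> = (2*k+1) ^ (c+1)" by simp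
  also have "\<dots> \<le> (2*k+1) ^ N" by (rule power_increasing[OF cN]) simp
  also have "\<dots> < (4 ^ N) ^ N" 
    using four_pow_gt[OF N] N unfolding k_def by (intro power_strict_mono) auto
  also have "\<dots> = 4 ^ k" unfolding k_def by (simp add: power_mult[symmetric] power2_eq_square)
  finally show False by simp
qed


definition pcount :: "nat \<Rightarrow> nat" where "pcount p = card {q. prime q \<and> q < p}"

lemma pcount_mono:
  assumes "prime p" "p < p'" shows "pcount p < pcount p'"
proof -
  have "{q. prime q \<and> q < p} \<subset> {q. prime q \<and> q < p'}" using assms by auto
  moreover have "finite {q. prime q \<and> q < p'}" by simp
  ultimately show ?thesis unfolding pcount_def by (rule psubset_card_mono[rotated])
qed

lemma pcount_surj: "\<exists>p. prime p \<and> pcount p = k"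
proof (induction k)
  case 0
  have "{q. prime q \<and> q < (2::nat)} = {}" using prime_ge_2_nat by (auto simp: not_less)
  hence "pcount 2 = 0" unfolding pcount_def by simp
  thus ?case by (intro exI[of _ 2]) simp
next
  case (Suc k)
  then obtain p where p: "prime p" "pcount p = k" by blast
  define p' where "p' = (LEAST q. prime q \<and> p < q)"
  have ex: "\<exists>q. prime q \<and> p < q" by (rule bigger_prime)
  have p': "prime p' \<and> p < p'" unfolding p'_def by (rule LeastI_ex[OF ex])
  have le: "\<And>q. prime q \<Longrightarrow> p < q \<Longrightarrow> p' \<le> q" unfolding p'_def by (rule Least_le) simp
  have "{q. prime q \<and> q < p'} = insert p {q. prime q \<and> q < p}"
  proof (rule equalityI; rule subsetI)
    fix q assume "q \<in> {q. prime q \<and> q < p'}"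
    hence "prime q" "q < p'" by auto
    hence "\<not> p < q" using le[of q] by auto
    thus "q \<in> insert p {q. prime q \<and> q < p}" using \<open>prime q\<close> by auto
  next
    fix q assume "q \<in> insert p {q. prime q \<and> q < p}"
    thus "q \<in> {q. prime q \<and> q < p'}" using p p' by auto
  qed
  hence "pcount p' = Suc (pcount p)" unfolding pcount_def by simp
  thus ?case using p p' by auto
qed

lemma first_primes_eq: "first_primes N = {p. prime p \<and> pcount p < N}"
  unfolding first_primes_def pcount_def by simp

lemma first_primes_bij: "bij_betw pcount (first_primes N) {..<N}"
proof (rule bij_betw_imageI)
  show "inj_on pcount (first_primes N)"
  proof (rule inj_onI)
    fix p q assume "p \<in> first_primes N" "q \<in> first_primes N" "pcount p = pcount q"
    hence "prime p" "prime q" by (auto simp: first_primes_eq)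
    show "p = q"
    proof (rule ccontr)
      assume "p \<noteq> q"
      hence "p < q \<or> q < p" by auto
      thus False using pcount_mono[of p q] pcount_mono[of q p] \<open>prime p\<close> \<open>prime q\<close> \<open>pcount p = pcount q\<close> by auto
    qed
  qed
  show "pcount ` first_primes N = {..<N}"
  proof
    show "pcount ` first_primes N \<subseteq> {..<N}" by (auto simp: first_primes_eq)
    show "{..<N} \<subseteq> pcount ` first_primes N"
    proof
      fix k assume k: "k \<in> {..<N}"
      obtain p where p: "prime p" "pcount p = k" using pcount_surj by blast
      hence "p \<in> first_primes N" using k unfolding first_primes_eq by simp
      thus "k \<in> pcount ` first_primes N" using p by (intro image_eqI[of _ _ p]) auto
    qed
  qed
qed

lemma finite_first_primes: "finite (first_primes N)"
  using bij_betw_finite[OF first_primes_bij] by simp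

lemma card_first_primes: "card (first_primes N) = N"
  using bij_betw_same_card[OF first_primes_bij] by simp

lemma two_in_first_primes: "N \<ge> 1 \<Longrightarrow> 2 \<in> first_primes N"
proof -
  assume "N \<ge> 1"
  have "{q. prime q \<and> q < (2::nat)} = {}" using prime_ge_2_nat by (auto simp: not_less)
  hence c: "card {q. prime q \<and> q < (2::nat)} = 0" by (simp only: card.empty)
  show ?thesis unfolding first_primes_def mem_Collect_eq c using \<open>N \<ge> 1\<close> unfolding first_primes_def by simp
qed

lemma first_primes_prime: "p \<in> first_primes N \<Longrightarrow> prime p"
  unfolding first_primes_def by simp



lemma first_primes_le:
  assumes N: "N \<ge> 1" and p: "p \<in> first_primes N" shows "p \<le> 2 * N^2"
proof (rule ccontr)
  assume "\<not> p \<le> 2 * N^2"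
  hence "{q. prime q \<and> q \<le> 2 * N^2} \<subseteq> {q. prime q \<and> q < p}" by auto
  hence "card {q. prime q \<and> q \<le> 2 * N^2} \<le> card {q. prime q \<and> q < p}"
    by (rule card_mono[rotated]) simp
  moreover have "card {q. prime q \<and> q < p} < N" using p unfolding first_primes_def by simp
  ultimately show False using pi_lower[OF N] by linarith
qed

lemma pow_bound: "K \<ge> 30 \<Longrightarrow> 5 * K^2 * 2^K \<le> (3::nat) ^ K"
proof (induction K rule: nat_induct_at_least)
  case base thus ?case by simp
next
  case (Suc K)
  have h: "2 * (Suc K)^2 \<le> 3 * K^2"
  proof -
    have "30 * K \<le> K * K" using Suc(1) by simp
    hence "4 * K + 2 \<le> K * K" using Suc(1) by linarith
    thus ?thesis by (simp add: power2_eq_square algebra_simps)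
  qed
  have "5 * (Suc K)^2 * 2 ^ Suc K = 5 * (2 * (Suc K)^2) * 2 ^ K" by simp
  also have "\<dots> \<le> 5 * (3 * K^2) * 2 ^ K" using h by simp
  also have "\<dots> = 3 * (5 * K^2 * 2^K)" by simp
  also have "\<dots> \<le> 3 * 3 ^ K" using Suc(2) by simp
  finally show ?case by simp
qed
lemma entry_nat_bound:
  assumes n: "n \<ge> 1"
  shows "\<bar>rand_entry n m w i j\<bar> \<le> int ((2 * (2^(n*m)*n)^2) ^ (2^(n*m)*n))"
proof -
  define N where "N = 2^(n*m)*n"
  have N1: "N \<ge> 1" unfolding N_def using n by simp
  define S where "S = {p \<in> first_primes N. w (i, j, p)}"
  have finS: "finite S" unfolding S_def using finite_first_primes by simp
  have eq: "rand_entry n m w i j = int (\<Prod>p\<in>S. p)" unfolding rand_entry_def S_def N_def by simp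
  have cS: "card S \<le> N"
    using card_mono[OF finite_first_primes, of S N] card_first_primes[of N] unfolding S_def by auto
  have "(\<Prod>p\<in>S. p) \<le> (\<Prod>p\<in>S. 2 * N^2)"
    by (rule prod_mono) (auto simp: S_def intro: first_primes_le[OF N1])
  also have "(\<Prod>p\<in>S. 2 * N^2) = (2 * N^2) ^ card S" by simp
  also have "(2 * N^2) ^ card S \<le> (2 * N^2) ^ N"
    using cS N1 by (intro power_increasing) auto
  finally have le: "(\<Prod>p\<in>S. p) \<le> (2 * N^2) ^ N" .
  have "\<bar>rand_entry n m w i j\<bar> = int (\<Prod>p\<in>S. p)" unfolding eq by (rule abs_of_nonneg, rule of_nat_0_le_iff)
  also have "\<dots> \<le> int ((2 * N^2) ^ N)" using le by (simp only: of_nat_le_iff)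
  finally show ?thesis unfolding N_def .
qed

lemma numeric_bound:
  fixes n m :: nat assumes n: "n \<ge> 30" and m: "m \<ge> n"
  shows "real ((2 * (2^(n*m)*n)^2) ^ (2^(n*m)*n)) \<le> exp (3 ^ (n * m))"
proof -
  define K where "K = n * m"
  define N where "N = 2^K*n"
  have nK: "n \<le> K" unfolding K_def using m n by simp
  have K30: "K \<ge> 30" using nK n by simp
  have "N \<le> 2^K * K" unfolding N_def using nK by simp
  also have "\<dots> \<le> 2^K * 2^K" using less_exp[of K] by simp
  finally have N4: "N \<le> 2^K * 2^K" .
  have "2 * N^2 \<le> 2 * (2^K * 2^K)^2" using N4 by (simp add: power_mono)
  also have "\<dots> = 2 * 2^(4*K)"
  proof -
    have "(2^K*2^K)^2 = (2::nat)^(K+K+(K+K))" by (simp add: power_add power2_eq_square)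
    moreover have "K+K+(K+K) = 4*K" by simp
    ultimately show ?thesis by simp
  qed
  also have "\<dots> \<le> 2^K * 2^(4*K)"
  proof -
    have "(2::nat)^1 \<le> 2^K" using K30 by (intro power_increasing) auto
    thus ?thesis by simp
  qed
  also have "\<dots> = 2^(5*K)" by (simp add: power_add[symmetric])
  finally have b1: "2 * N^2 \<le> 2^(5*K)" .
  have "(2 * N^2) ^ N \<le> (2^(5*K)) ^ N" using b1 by (rule power_mono) simp
  also have "\<dots> = 2 ^ (5*K*N)" by (simp add: power_mult)
  finally have b2: "(2 * N^2) ^ N \<le> (2::nat) ^ (5*K*N)" .
  have "5*K*N \<le> 5 * K^2 * 2^K" unfolding N_def using nK by (simp add: power2_eq_square)
  also have "\<dots> \<le> 3 ^ K" using pow_bound[OF K30] .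
  finally have b3: "5*K*N \<le> 3 ^ K" .
  have "real ((2 * N^2) ^ N) \<le> real ((2::nat) ^ (5*K*N))" using b2 by (simp only: of_nat_le_iff)
  also have "\<dots> = (2::real) ^ (5*K*N)" by simp
  also have "\<dots> \<le> (exp 1) ^ (5*K*N)"
    using exp_ge_add_one_self[of 1] by (intro power_mono) auto
  also have "\<dots> = exp (real (5*K*N))" by (simp add: exp_of_nat_mult[symmetric])
  also have "\<dots> \<le> exp (real (3 ^ K))"
  proof -
    have "real (5*K*N) \<le> real (3^K)" using b3 by (simp only: of_nat_le_iff)
    thus ?thesis by (simp only: exp_le_cancel_iff)
  qed
  also have "\<dots> = exp (3 ^ K)" by simp
  finally show ?thesis unfolding N_def K_def .
qed


abbreviation coins :: "'a set \<Rightarrow> ('a \<Rightarrow> bool) pmf" where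
  "coins A \<equiv> Pi_pmf A False (\<lambda>_. bernoulli_pmf (1/2))"

lemma coins_uniform: "finite A \<Longrightarrow> coins A = pmf_of_set (PiE_dflt A False (\<lambda>_. UNIV))"
  by (simp add: bernoulli_pmf_half_conv_pmf_of_set Pi_pmf_of_set)

lemma flip_invariant:
  assumes A: "finite A" and x: "x \<in> A"
  shows "map_pmf (\<lambda>w. w(x := \<not> w x)) (coins A) = coins A"
proof -
  define S where "S = PiE_dflt A False (\<lambda>_. UNIV :: bool set)"
  define f where "f = (\<lambda>w::'a\<Rightarrow>bool. w(x := \<not> w x))"
  have ff: "f (f w) = w" for w unfolding f_def by auto
  have fS: "w \<in> S \<Longrightarrow> f w \<in> S" for w using x unfolding S_def f_def PiE_dflt_def by auto
  have finS: "finite S" unfolding S_def using A by (intro finite_PiE_dflt) auto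
  have neS: "S \<noteq> {}" unfolding S_def by simp
  have inj: "inj_on f S" by (metis ff inj_onI)
  have img: "f ` S = S"
  proof
    show "f ` S \<subseteq> S" using fS by auto
    show "S \<subseteq> f ` S"
    proof
      fix w assume "w \<in> S"
      thus "w \<in> f ` S" using fS[of "f w"] ff[of w] fS by (metis image_eqI)
    qed
  qed
  have "map_pmf f (coins A) = map_pmf f (pmf_of_set S)" unfolding S_def using coins_uniform[OF A] by simp
  also have "\<dots> = pmf_of_set (f ` S)" by (rule map_pmf_of_set_inj[OF inj neS finS])
  also have "\<dots> = coins A" using img coins_uniform[OF A] unfolding S_def by simp
  finally show ?thesis unfolding f_def .
qed

lemma half_bound:
  assumes A: "finite A" and x: "x \<in> A"
    and disj: "\<And>w. w \<in> E \<Longrightarrow> w(x := \<not> w x) \<in> E \<Longrightarrow> False"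
  shows "measure_pmf.prob (coins A) E \<le> 1/2"
proof -
  define f where "f = (\<lambda>w::'a\<Rightarrow>bool. w(x := \<not> w x))"
  have "measure_pmf.prob (coins A) (f -` E) = measure_pmf.prob (map_pmf f (coins A)) E"
    by (simp add: measure_map_pmf)
  also have "map_pmf f (coins A) = coins A" unfolding f_def by (rule flip_invariant[OF A x])
  finally have eq: "measure_pmf.prob (coins A) (f -` E) = measure_pmf.prob (coins A) E" .
  have "E \<inter> f -` E = {}" using disj unfolding f_def by auto
  hence "measure_pmf.prob (coins A) (E \<union> f -` E) = measure_pmf.prob (coins A) E + measure_pmf.prob (coins A) (f -` E)"
    by (intro measure_pmf.finite_measure_Union) auto
  moreover have "measure_pmf.prob (coins A) (E \<union> f -` E) \<le> 1" by (rule measure_pmf.prob_le_1)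
  ultimately show ?thesis using eq by simp
qed

lemma coin_space_eq: "coin_space n m = coins ({..<n} \<times> {..<m} \<times> first_primes (2 ^ (n * m) * n))"
  unfolding coin_space_def ..


lemma entry_split:
  fixes P :: "nat set" and w :: "nat \<times> nat \<times> nat \<Rightarrow> bool"
  assumes fin: "finite P" and q: "q \<in> P"
  shows "(\<Prod>p\<in>{p \<in> P. w (i, j, p)}. int p) =
         (if w (i, j, q) then int q else 1) * (\<Prod>p\<in>{p \<in> P - {q}. w (i, j, p)}. int p)"
proof (cases "w (i, j, q)")
  case True
  have "{p \<in> P. w (i, j, p)} = insert q {p \<in> P - {q}. w (i, j, p)}" using True q by auto
  thus ?thesis using True fin by simp
next
  case False
  have "{p \<in> P. w (i, j, p)} = {p \<in> P - {q}. w (i, j, p)}" using False by auto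
  thus ?thesis using False by simp
qed

lemma entry_balanced:
  assumes n: "n \<ge> 1" and i: "i < n" and j: "j < m" and p: "prime p"
  shows "measure_pmf.prob (coin_space n m) {w. [rand_entry n m w i j = r] (mod int p)} \<le> 1/2"
proof -
  define N where "N = 2 ^ (n * m) * n"
  define P where "P = first_primes N"
  define A where "A = {..<n} \<times> {..<m} \<times> P"
  have N1: "N \<ge> 1" unfolding N_def using n by simp
  have finP: "finite P" unfolding P_def by (rule finite_first_primes)
  define q where "q = (if p \<in> P then p else 2)"
  have qP: "q \<in> P" unfolding q_def P_def using two_in_first_primes[OF N1] by auto
  define x where "x = (i, j, q)"
  have xA: "x \<in> A" unfolding x_def A_def using i j qP by simp
  have finA: "finite A" unfolding A_def using finP by simp
  define R where "R = (\<lambda>w::nat\<times>nat\<times>nat\<Rightarrow>bool. \<Prod>p'\<in>{p' \<in> P - {q}. w (i, j, p')}. int p')"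
  have split: "rand_entry n m w i j = (if w x then int q else 1) * R w" for w
    unfolding rand_entry_def R_def x_def N_def[symmetric] P_def[symmetric] by (rule entry_split[OF finP qP])
  have Rflip: "R (w(x := \<not> w x)) = R w" for w
  proof -
    have "{p' \<in> P - {q}. (w(x := \<not> w x)) (i, j, p')} = {p' \<in> P - {q}. w (i, j, p')}"
      unfolding x_def by auto
    thus ?thesis unfolding R_def by simp
  qed
  have pint: "prime (int p)" using p by (simp add: prime_nat_int_transfer)
  have notR: "\<not> int p dvd R w" for w
  proof
    assume "int p dvd R w"
    have fs: "finite {p' \<in> P - {q}. w (i, j, p')}" using finP by simp
    have "\<exists>p'\<in>{p' \<in> P - {q}. w (i, j, p')}. int p dvd int p'"
      using prime_dvd_prod_iff[OF fs pint, of int] \<open>int p dvd R w\<close> unfolding R_def by blast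
    then obtain p' where p': "p' \<in> {p' \<in> P - {q}. w (i, j, p')}" "int p dvd int p'" by blast
    have "prime p'" using p' first_primes_prime unfolding P_def by auto
    hence "p = p'" using p p'(2) primes_dvd_imp_eq by (simp add: int_dvd_int_iff)
    thus False using p'(1) q_def by (cases "p \<in> P") auto
  qed
  have notq: "\<not> int p dvd int q - 1"
  proof
    assume h: "int p dvd int q - 1"
    show False
    proof (cases "p \<in> P")
      case True
      hence "int p dvd int p - 1" using h q_def by simp
      hence "int p dvd int p - (int p - 1)" by (rule dvd_diff[OF dvd_refl])
      hence "int p dvd 1" by simp
      thus False using pint by (simp add: prime_int_iff)
    next
      case False
      hence "int p dvd 1" using h q_def by simp
      thus False using pint by (simp add: prime_int_iff)
    qed
  qed
  have "measure_pmf.prob (coins A) {w. [rand_entry n m w i j = r] (mod int p)} \<le> 1/2"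
  proof (rule half_bound[OF finA xA])
    fix w assume w1: "w \<in> {w. [rand_entry n m w i j = r] (mod int p)}"
      and w2: "w(x := \<not> w x) \<in> {w. [rand_entry n m w i j = r] (mod int p)}"
    have c1: "[(if w x then int q else 1) * R w = r] (mod int p)" using w1 split[of w] by simp
    have c2: "[(if \<not> w x then int q else 1) * R w = r] (mod int p)"
      using w2 split[of "w(x := \<not> w x)"] Rflip[of w] by simp
    have "[int q * R w = 1 * R w] (mod int p)"
      using c1 c2 by (cases "w x") (auto intro: cong_trans cong_sym)
    hence "int p dvd (int q - 1) * R w" by (simp add: cong_iff_dvd_diff algebra_simps)
    hence "int p dvd (int q - 1) \<or> int p dvd R w" using pint by (simp add: prime_dvd_mult_iff)
    thus False using notR notq by blast
  qed
  thus ?thesis unfolding coin_space_def A_def P_def N_def .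
qed



lemma block_indep:
  fixes A :: "'a set" and L :: "'l set" and K :: "'l \<Rightarrow> 'a set" and g :: "'l \<Rightarrow> ('a \<Rightarrow> bool) \<Rightarrow> 'b"
  assumes finA: "finite A" and KA: "\<And>l. l \<in> L \<Longrightarrow> K l \<subseteq> A" and disj: "disjoint_family_on K L"
    and dep: "\<And>l w w'. l \<in> L \<Longrightarrow> (\<And>x. x \<in> K l \<Longrightarrow> w x = w' x) \<Longrightarrow> g l w = g l w'"
  shows "prob_space.indep_vars (measure_pmf (coins A)) (\<lambda>_. count_space UNIV) g L"
proof -
  have ind: "prob_space.indep_vars (measure_pmf (coins A)) (\<lambda>_. count_space UNIV) (\<lambda>x f. f x) A"
    by (rule indep_vars_Pi_pmf[OF finA])
  have r: "prob_space.indep_vars (measure_pmf (coins A)) (\<lambda>l. PiM (K l) (\<lambda>_. count_space UNIV))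
             (\<lambda>l \<omega>. restrict (\<lambda>i. \<omega> i) (K l)) L"
    by (rule prob_space.indep_vars_restrict[OF measure_pmf.prob_space_axioms ind KA disj])
  have meas: "g l \<in> measurable (PiM (K l) (\<lambda>_. count_space UNIV)) (count_space UNIV)" if l: "l \<in> L" for l
  proof -
    have "finite (K l)" using KA[OF l] finA by (rule finite_subset)
    hence "PiM (K l) (\<lambda>_. count_space (UNIV :: bool set)) = count_space (PiE (K l) (\<lambda>_. UNIV))"
      by (intro count_space_PiM_finite) auto
    thus ?thesis by simp
  qed
  have c: "prob_space.indep_vars (measure_pmf (coins A)) (\<lambda>_. count_space UNIV)
             (\<lambda>l x. g l (restrict (\<lambda>i. x i) (K l))) L"
    by (rule prob_space.indep_vars_compose2[OF measure_pmf.prob_space_axioms r meas])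
  show ?thesis
  proof (rule iffD1[OF prob_space.indep_vars_cong[OF measure_pmf.prob_space_axioms] c])
    fix l assume "l \<in> L"
    thus "(\<lambda>x. g l (restrict (\<lambda>i. x i) (K l))) = g l" by (intro ext dep) auto
  qed auto
qed

lemma matrix_indep:
  "prob_space.indep_vars (measure_pmf (coin_space n m)) (\<lambda>_. count_space UNIV)
      (\<lambda>(i,j) w. rand_entry n m w i j) ({..<n} \<times> {..<m})"
proof -
  define P where "P = first_primes (2 ^ (n * m) * n)"
  have finP: "finite P" unfolding P_def by (rule finite_first_primes)
  show ?thesis unfolding coin_space_eq P_def[symmetric]
  proof (rule block_indep[where K = "\<lambda>(i,j). {i} \<times> {j} \<times> P"])
    show "finite ({..<n} \<times> {..<m} \<times> P)" using finP by simp
    show "disjoint_family_on (\<lambda>(i,j). {i} \<times> {j} \<times> P) ({..<n} \<times> {..<m})"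
      by (auto simp: disjoint_family_on_def)
  next
    fix l assume "l \<in> {..<n} \<times> {..<m}"
    thus "(case l of (i, j) \<Rightarrow> {i} \<times> {j} \<times> P) \<subseteq> {..<n} \<times> {..<m} \<times> P" by auto
  next
    fix l and w w' :: "nat \<times> nat \<times> nat \<Rightarrow> bool" assume l: "l \<in> {..<n} \<times> {..<m}"
      and ag: "\<And>x. x \<in> (case l of (i, j) \<Rightarrow> {i} \<times> {j} \<times> P) \<Longrightarrow> w x = w' x"
    obtain i j where ij: "l = (i, j)" by (cases l)
    have "{p \<in> P. w (i, j, p)} = {p \<in> P. w' (i, j, p)}" using ag unfolding ij by auto
    thus "(case l of (i, j) \<Rightarrow> \<lambda>w. rand_entry n m w i j) w = (case l of (i, j) \<Rightarrow> \<lambda>w. rand_entry n m w i j) w'"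
      unfolding ij rand_entry_def P_def by simp
  qed
qed

lemma all_true_prob:
  fixes A :: "'a set" and K :: "'a set"
  assumes finA: "finite A" and KA: "K \<subseteq> A"
  shows "measure_pmf.prob (coins A) {w. \<forall>x\<in>K. w x} = (1/2) ^ card K"
proof -
  define B where "B = (\<lambda>x. if x \<in> K then {True} else (UNIV :: bool set))"
  have "{w. \<forall>x\<in>K. w x} = Pi A B" using KA unfolding B_def Pi_def by auto
  hence "measure_pmf.prob (coins A) {w. \<forall>x\<in>K. w x} = (\<Prod>x\<in>A. measure_pmf.prob (bernoulli_pmf (1/2)) (B x))"
    using measure_Pi_pmf_Pi[OF finA] by simp
  also have "\<dots> = (\<Prod>x\<in>A. if x \<in> K then 1/2 else 1)"
    by (rule prod.cong) (auto simp: B_def measure_pmf_single)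
  also have "\<dots> = (\<Prod>x\<in>A \<inter> K. 1/2)"
    using finA by (simp add: prod.If_cases)
  also have "A \<inter> K = K" using KA by auto
  finally show ?thesis by simp
qed

lemma surj_subset:
  assumes n: "n \<ge> 1"
  shows "{w. int_mat_surj n m (rand_entry n m w)} \<subseteq>
         {w. \<forall>p\<in>first_primes (2 ^ (n * m) * n). \<exists>j<m. \<not> w (0, j, p)}"
proof
  fix w assume "w \<in> {w. int_mat_surj n m (rand_entry n m w)}"
  hence surj: "int_mat_surj n m (rand_entry n m w)" by simp
  show "w \<in> {w. \<forall>p\<in>first_primes (2 ^ (n * m) * n). \<exists>j<m. \<not> w (0, j, p)}"
  proof (rule CollectI, rule ballI, rule ccontr)
    fix p assume pP: "p \<in> first_primes (2 ^ (n * m) * n)" and "\<not> (\<exists>j<m. \<not> w (0, j, p))"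
    hence allw: "\<And>j. j < m \<Longrightarrow> w (0, j, p)" by auto
    have h: "\<exists>x. \<forall>i<n. (\<Sum>j<m. rand_entry n m w i j * x j) = (\<lambda>_::nat. 1::int) i"
      using spec[OF surj[unfolded int_mat_surj_def], of "\<lambda>_. 1"] .
    then obtain x where x: "\<forall>i<n. (\<Sum>j<m. rand_entry n m w i j * x j) = (\<lambda>_::nat. 1::int) i"
      by (elim exE)
    hence s1: "(\<Sum>j<m. rand_entry n m w 0 j * x j) = 1" using n by auto
    have fin: "finite (first_primes (2 ^ (n * m) * n))" by (rule finite_first_primes)
    have "int p dvd rand_entry n m w 0 j" if "j < m" for j
      unfolding rand_entry_def
      by (rule dvd_prodI) (use fin pP allw[OF that] in auto)
    hence "int p dvd (\<Sum>j<m. rand_entry n m w 0 j * x j)" by (intro dvd_sum dvd_mult2) auto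
    hence "int p dvd 1" using s1 by simp
    moreover have "prime p" using pP by (rule first_primes_prime)
    ultimately show False by (simp add: prime_int_iff)
  qed
qed

lemma surj_bound:
  assumes n: "n \<ge> 1" and nm: "n \<le> m"
  shows "measure_pmf.prob (coin_space n m) {w. int_mat_surj n m (rand_entry n m w)} \<le> exp (- real n)"
proof -
  define N where "N = 2 ^ (n * m) * n"
  define P where "P = first_primes N"
  define A where "A = {..<n} \<times> {..<m} \<times> P"
  define M where "M = coins A"
  define K where "K = (\<lambda>p. {0::nat} \<times> {..<m} \<times> {p::nat})"
  define g where "g = (\<lambda>p (w::nat\<times>nat\<times>nat\<Rightarrow>bool). \<exists>j<m. \<not> w (0, j, p))"
  have N1: "N \<ge> 1" unfolding N_def using n by simp
  have finP: "finite P" unfolding P_def by (rule finite_first_primes)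
  have Pne: "P \<noteq> {}" using two_in_first_primes[OF N1] unfolding P_def by auto
  have cardP: "card P = N" unfolding P_def by (rule card_first_primes)
  have finA: "finite A" unfolding A_def using finP by simp
  have KA: "K p \<subseteq> A" if "p \<in> P" for p using that n unfolding K_def A_def by auto
  have cardK: "card (K p) = m" for p
  proof -
    have "K p = (\<lambda>j. (0, j, p)) ` {..<m}" unfolding K_def by auto
    moreover have "inj_on (\<lambda>j. (0::nat, j, p)) {..<m}" by (auto simp: inj_on_def)
    ultimately show ?thesis by (simp add: card_image)
  qed
  have ind: "prob_space.indep_vars (measure_pmf M) (\<lambda>_. count_space UNIV) g P"
    unfolding M_def
  proof (rule block_indep[OF finA KA])
    show "disjoint_family_on K P" unfolding K_def by (auto simp: disjoint_family_on_def)
    fix p and w w' :: "nat \<times> nat \<times> nat \<Rightarrow> bool"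
    assume "p \<in> P" and ag: "\<And>x. x \<in> K p \<Longrightarrow> w x = w' x"
    thus "g p w = g p w'" unfolding g_def K_def by auto
  qed
  have "measure_pmf.prob M (\<Inter>p\<in>P. g p -` {True} \<inter> space (measure_pmf M)) =
        (\<Prod>p\<in>P. measure_pmf.prob M (g p -` {True} \<inter> space (measure_pmf M)))"
    by (rule prob_space.indep_varsD_finite[OF measure_pmf.prob_space_axioms ind Pne finP]) auto
  moreover have "(\<Inter>p\<in>P. g p -` {True} \<inter> space (measure_pmf M)) = {w. \<forall>p\<in>P. \<exists>j<m. \<not> w (0, j, p)}"
    using Pne unfolding g_def by auto
  moreover have "measure_pmf.prob M (g p -` {True} \<inter> space (measure_pmf M)) = 1 - (1/2)^m" if p: "p \<in> P" for p
  proof -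
    have "g p -` {True} \<inter> space (measure_pmf M) = space (measure_pmf M) - {w. \<forall>x\<in>K p. w x}"
      unfolding g_def K_def by auto
    hence "measure_pmf.prob M (g p -` {True} \<inter> space (measure_pmf M)) = 1 - measure_pmf.prob M {w. \<forall>x\<in>K p. w x}"
      using measure_pmf.prob_compl[of "{w. \<forall>x\<in>K p. w x}" M] by simp
    also have "measure_pmf.prob M {w. \<forall>x\<in>K p. w x} = (1/2) ^ m"
      unfolding M_def using all_true_prob[OF finA KA[OF p]] cardK by simp
    finally show ?thesis .
  qed
  ultimately have probF: "measure_pmf.prob M {w. \<forall>p\<in>P. \<exists>j<m. \<not> w (0, j, p)} = (1 - (1/2)^m) ^ N"
    using cardP by simp
  have "measure_pmf.prob (coin_space n m) {w. int_mat_surj n m (rand_entry n m w)} \<le>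
        measure_pmf.prob M {w. \<forall>p\<in>P. \<exists>j<m. \<not> w (0, j, p)}"
    unfolding M_def A_def P_def N_def coin_space_eq
    by (rule measure_pmf.finite_measure_mono[OF surj_subset[OF n]]) simp
  also have "\<dots> = (1 - (1/2)^m) ^ N" by (rule probF)
  also have "\<dots> \<le> exp (- ((1/2)^m)) ^ N"
    by (rule power_mono) (use exp_ge_add_one_self[of "- ((1/2)^m)"] in \<open>auto simp: power_le_one\<close>)
  also have "\<dots> = exp (- (real N * (1/2)^m))" by (simp add: exp_of_nat_mult[symmetric])
  also have "\<dots> \<le> exp (- real n)"
  proof -
    have "(2::real) ^ m \<le> 2 ^ (n * m)" using n by (intro power_increasing) auto
    hence "real n * 2 ^ m \<le> real n * 2 ^ (n * m)" by (intro mult_left_mono) auto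
    hence "real n \<le> real n * 2 ^ (n * m) / 2 ^ m" by (simp add: field_simps)
    also have "\<dots> = real N * (1/2)^m" unfolding N_def by (simp add: field_simps power_one_over)
    finally show ?thesis by simp
  qed
  finally show ?thesis .
qed


theorem mainTheorem5:
  shows "(\<forall>n m. 1 \<le> n \<longrightarrow> n \<le> m \<longrightarrow>
            eps_balanced_matrix (1/2) (coin_space n m) n m (rand_entry n m))
       \<and> (\<exists>n0. \<forall>n\<ge>n0. \<forall>m\<ge>n.
            AE w in measure_pmf (coin_space n m).
              \<forall>i<n. \<forall>j<m. \<bar>real_of_int (rand_entry n m w i j)\<bar> \<le> exp (3 ^ (n * m)))
       \<and> (\<forall>n m. 1 \<le> n \<longrightarrow> n \<le> m \<longrightarrow>
            measure_pmf.prob (coin_space n m) {w. int_mat_surj n m (rand_entry n m w)}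
              \<le> exp (- real n))"
proof (intro conjI)
  show "\<forall>n m. 1 \<le> n \<longrightarrow> n \<le> m \<longrightarrow>
            eps_balanced_matrix (1/2) (coin_space n m) n m (rand_entry n m)"
  proof (intro allI impI)
    fix n m :: nat assume n: "1 \<le> n" and "n \<le> m"
    show "eps_balanced_matrix (1/2) (coin_space n m) n m (rand_entry n m)"
      unfolding eps_balanced_matrix_def
    proof (intro conjI allI impI)
      show "prob_space.indep_vars (measure_pmf (coin_space n m)) (\<lambda>_. count_space UNIV)
              (\<lambda>(i, j) w. rand_entry n m w i j) ({..<n} \<times> {..<m})" by (rule matrix_indep)
    next
      fix i j assume i: "i < n" and j: "j < m"
      show "eps_balanced (1/2) (map_pmf (\<lambda>w. rand_entry n m w i j) (coin_space n m))"
        unfolding eps_balanced_def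
      proof (intro allI impI)
        fix p :: nat and r :: int assume p: "prime p"
        have "measure_pmf.prob (coin_space n m) {w. [rand_entry n m w i j = r] (mod int p)} \<le> 1/2"
          by (rule entry_balanced[OF n i j p])
        thus "measure_pmf.prob (map_pmf (\<lambda>w. rand_entry n m w i j) (coin_space n m))
                {y. [y = r] (mod int p)} \<le> 1 - 1/2"
          by (simp add: measure_map_pmf vimage_def)
      qed
    qed
  qed
next
  show "\<exists>n0. \<forall>n\<ge>n0. \<forall>m\<ge>n.
            AE w in measure_pmf (coin_space n m).
              \<forall>i<n. \<forall>j<m. \<bar>real_of_int (rand_entry n m w i j)\<bar> \<le> exp (3 ^ (n * m))"
  proof (intro exI[of _ 30] allI impI)
    fix n m :: nat assume n: "30 \<le> n" and m: "n \<le> m"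
    show "AE w in measure_pmf (coin_space n m).
              \<forall>i<n. \<forall>j<m. \<bar>real_of_int (rand_entry n m w i j)\<bar> \<le> exp (3 ^ (n * m))"
    proof (rule AE_I2, intro allI impI)
      fix w i j assume "i < n" "j < m"
      have n1: "n \<ge> 1" using n by simp
      have "\<bar>real_of_int (rand_entry n m w i j)\<bar> = real_of_int \<bar>rand_entry n m w i j\<bar>" by simp
      also have "\<dots> \<le> real_of_int (int ((2 * (2^(n*m)*n)^2) ^ (2^(n*m)*n)))"
        using entry_nat_bound[OF n1, of m w i j] by (simp only: of_int_le_iff)
      also have "\<dots> = real ((2 * (2^(n*m)*n)^2) ^ (2^(n*m)*n))" by (simp only: of_int_of_nat_eq)
      also have "\<dots> \<le> exp (3 ^ (n * m))" by (rule numeric_bound[OF n m])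
      finally show "\<bar>real_of_int (rand_entry n m w i j)\<bar> \<le> exp (3 ^ (n * m))" .
    qed
  qed
next
  show "\<forall>n m. 1 \<le> n \<longrightarrow> n \<le> m \<longrightarrow>
            measure_pmf.prob (coin_space n m) {w. int_mat_surj n m (rand_entry n m w)}
              \<le> exp (- real n)"
    using surj_bound by blast
qed

end
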